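(* Let $D\subset\mathbb{C}^n$ be a bounded homogeneous domain with $0\in D$, let $\mu:D\to(0,\infty)$ be a weight, let $\psi\in H(D)$ and let $\varphi$ be a holomorphic self-map of $D$. If the weighted composition operator $W_{\psi,\varphi}:\mathcal{B}(D)\to H^\infty_\mu(D)$, $W_{\psi,\varphi}f=\psi\,(f\circ\varphi)$, is bounded, then $$\upsilon_{0,\mu}(\psi,\varphi)\le \upsilon_\mu(\psi,\varphi)\le \|W_{\psi,\varphi}\|,$$ where $\upsilon_\mu(\psi,\varphi)=\sup_{z\in D}\mu(z)|\psi(z)|\,\omega(\varphi(z))$ and $\upsilon_{0,\mu}(\psi,\varphi)=\sup_{z\in D}\mu(z)|\psi(z)|\,\omega_0(\varphi(z))$.
   Context: $H(D)$ denotes the holomorphic functions $D\to\mathbb{C}$. A domain is homogeneous if its group of biholomorphic automorphisms acts transitively. A weight is a continuous strictly positive function $\mu:D\to(0,\infty)$; $H^\infty_\mu(D)=\{f\in H(D):\|f\|_{H^\infty_\mu}=\sup_{z\in D}\mu(z)|f(z)|<\infty\}$. For $f\in H(D)$ and $z\in D$, $Q_f(z)=\sup_{u\in\mathbb{C}^n\setminus\{0\}}\frac{|\nabla f(z)u|}{H_z(u,\bar u)^{1/2}}$, where $\nabla f(z)u=\sum_k \frac{\partial f}{\partial z_k}(z)u_k$ and $H_z$ is the Bergman metric of $D$ at $z$. The Bloch space is $\mathcal{B}(D)=\{f\in H(D):\beta_f=\sup_{z\in D}Q_f(z)<\infty\}$ with norm $\|f\|_{\mathcal{B}}=|f(0)|+\beta_f$.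 The $*$-little Bloch space is $\mathcal{B}_{0*}(D)=\{f\in\mathcal{B}(D):\lim_{z\to\partial^* D}Q_f(z)=0\}$, where $\partial^*D$ is the distinguished boundary of $D$. For $z\in D$: $\omega(z)=\sup\{|f(z)|: f\in\mathcal{B}(D), f(0)=0, \|f\|_{\mathcal{B}}\le 1\}$ and $\omega_0(z)=\sup\{|f(z)|: f\in\mathcal{B}_{0*}(D), f(0)=0, \|f\|_{\mathcal{B}}\le 1\}$ (both are finite). *)

theory Defs
  imports "HOL-Analysis.Analysis"
begin

definition holo :: "(complex^'n \<Rightarrow> complex) \<Rightarrow> (complex^'n) set \<Rightarrow> bool" where
  "holo f D \<longleftrightarrow> (\<forall>z\<in>D. \<exists>L. (f has_derivative L) (at z) \<and> (\<forall>c v. L (c *s v) = c * L v))"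

definition holo_map :: "(complex^'n \<Rightarrow> complex^'m) \<Rightarrow> (complex^'n) set \<Rightarrow> bool" where
  "holo_map F D \<longleftrightarrow> (\<forall>i. holo (\<lambda>z. F z $ i) D)"

definition biholo_auto :: "(complex^'n \<Rightarrow> complex^'n) \<Rightarrow> (complex^'n) set \<Rightarrow> bool" where
  "biholo_auto F D \<longleftrightarrow> bij_betw F D D \<and> holo_map F D \<and> holo_map (inv_into D F) D"

definition homogeneous_domain :: "(complex^'n) set \<Rightarrow> bool" where
  "homogeneous_domain D \<longleftrightarrow> open D \<and> connected D \<and> D \<noteq> {} \<and>
     (\<forall>z\<in>D. \<forall>w\<in>D. \<exists>F. biholo_auto F D \<and> F z = w)"

text \<open>Bergman kernel on the diagonal, K(z,z) = sup of |f(z)|^2 over the unit ball of the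
  Bergman space A^2(D) (Lebesgue measure; normalisation irrelevant for the metric).\<close>
definition bergman_diag :: "(complex^'n) set \<Rightarrow> complex^'n \<Rightarrow> real" where
  "bergman_diag D z = Sup {(cmod (f z))^2 | f. holo f D \<and>
       (\<lambda>w. (cmod (f w))^2) integrable_on D \<and> integral D (\<lambda>w. (cmod (f w))^2) \<le> 1}"

text \<open>Bergman metric H_z(u,conj u) = sum_{j,k} d^2 log K(z,z)/dz_j d conj(z_k) u_j conj(u_k),
  written out as (1/4) times the Laplacian of lambda |-> log K(z + lambda u, z + lambda u) at 0.\<close>
definition bergman_metric :: "(complex^'n) set \<Rightarrow> complex^'n \<Rightarrow> complex^'n \<Rightarrow> real" where
  "bergman_metric D z u =
     (let g = (\<lambda>w. ln (bergman_diag D w)) in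
       (deriv (deriv (\<lambda>t::real. g (z + (complex_of_real t) *s u))) 0 +
        deriv (deriv (\<lambda>t::real. g (z + (\<i> * complex_of_real t) *s u))) 0) / 4)"

definition Qf :: "(complex^'n) set \<Rightarrow> (complex^'n \<Rightarrow> complex) \<Rightarrow> complex^'n \<Rightarrow> real" where
  "Qf D f z = Sup {cmod (frechet_derivative f (at z) u) / sqrt (bergman_metric D z u) | u. u \<noteq> 0}"

definition bloch_space :: "(complex^'n) set \<Rightarrow> (complex^'n \<Rightarrow> complex) set" where
  "bloch_space D = {f. holo f D \<and> bdd_above (Qf D f ` D)}"

definition bloch_seminorm :: "(complex^'n) set \<Rightarrow> (complex^'n \<Rightarrow> complex) \<Rightarrow> real" where
  "bloch_seminorm D f = (SUP z\<in>D. Qf D f z)"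

definition bloch_norm :: "(complex^'n) set \<Rightarrow> (complex^'n \<Rightarrow> complex) \<Rightarrow> real" where
  "bloch_norm D f = cmod (f 0) + bloch_seminorm D f"

definition distinguished_boundary :: "(complex^'n) set \<Rightarrow> (complex^'n) set" where
  "distinguished_boundary D = \<Inter> {S. closed S \<and> S \<subseteq> closure D \<and>
       (\<forall>f. continuous_on (closure D) f \<and> holo f D \<longrightarrow>
            (\<forall>x\<in>closure D. \<exists>y\<in>S. cmod (f x) \<le> cmod (f y)))}"

definition little_bloch_star :: "(complex^'n) set \<Rightarrow> (complex^'n \<Rightarrow> complex) set" where
  "little_bloch_star D = {f \<in> bloch_space D.
       \<forall>\<xi>\<in>distinguished_boundary D. ((\<lambda>z. Qf D f z) \<longlongrightarrow> 0) (at \<xi> within D)}"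

definition omega :: "(complex^'n) set \<Rightarrow> complex^'n \<Rightarrow> real" where
  "omega D z = Sup {cmod (f z) | f. f \<in> bloch_space D \<and> f 0 = 0 \<and> bloch_norm D f \<le> 1}"

definition omega0 :: "(complex^'n) set \<Rightarrow> complex^'n \<Rightarrow> real" where
  "omega0 D z = Sup {cmod (f z) | f. f \<in> little_bloch_star D \<and> f 0 = 0 \<and> bloch_norm D f \<le> 1}"

definition hinf_norm :: "(complex^'n) set \<Rightarrow> (complex^'n \<Rightarrow> real) \<Rightarrow> (complex^'n \<Rightarrow> complex) \<Rightarrow> real" where
  "hinf_norm D \<mu> f = (SUP z\<in>D. \<mu> z * cmod (f z))"

definition wco_bounded ::
  "(complex^'n) set \<Rightarrow> (complex^'n \<Rightarrow> real) \<Rightarrow> (complex^'n \<Rightarrow> complex) \<Rightarrow> (complex^'n \<Rightarrow> complex^'n) \<Rightarrow> bool" where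
  "wco_bounded D \<mu> \<psi> \<phi> \<longleftrightarrow> (\<exists>C. \<forall>f\<in>bloch_space D.
      bdd_above ((\<lambda>z. \<mu> z * cmod (\<psi> z * f (\<phi> z))) ` D) \<and>
      hinf_norm D \<mu> (\<lambda>z. \<psi> z * f (\<phi> z)) \<le> C * bloch_norm D f)"

definition wco_norm ::
  "(complex^'n) set \<Rightarrow> (complex^'n \<Rightarrow> real) \<Rightarrow> (complex^'n \<Rightarrow> complex) \<Rightarrow> (complex^'n \<Rightarrow> complex^'n) \<Rightarrow> real" where
  "wco_norm D \<mu> \<psi> \<phi> = Sup {hinf_norm D \<mu> (\<lambda>z. \<psi> z * f (\<phi> z)) | f. f \<in> bloch_space D \<and> bloch_norm D f \<le> 1}"

definition upsilon ::
  "(complex^'n) set \<Rightarrow> (complex^'n \<Rightarrow> real) \<Rightarrow> (complex^'n \<Rightarrow> complex) \<Rightarrow> (complex^'n \<Rightarrow> complex^'n) \<Rightarrow> real" where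
  "upsilon D \<mu> \<psi> \<phi> = (SUP z\<in>D. \<mu> z * cmod (\<psi> z) * omega D (\<phi> z))"

definition upsilon0 ::
  "(complex^'n) set \<Rightarrow> (complex^'n \<Rightarrow> real) \<Rightarrow> (complex^'n \<Rightarrow> complex) \<Rightarrow> (complex^'n \<Rightarrow> complex^'n) \<Rightarrow> real" where
  "upsilon0 D \<mu> \<psi> \<phi> = (SUP z\<in>D. \<mu> z * cmod (\<psi> z) * omega0 D (\<phi> z))"

end

theory Submission
  imports Defs
begin

lemma ex_nonzero_vec: "\<exists>u::complex^'n. u \<noteq> 0"
proof -
  have "((\<chi> i. (1::complex)) :: complex^'n) \<noteq> 0"
    by (metis one_neq_zero vec_lambda_beta zero_index)
  then show ?thesis by blast
qed

lemma Qf_zero: "Qf D (\<lambda>_. 0) z = 0"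
proof -
  have "{cmod (frechet_derivative (\<lambda>_. 0::complex) (at z) u) / sqrt (bergman_metric D z u) | u. u \<noteq> 0} = {0}"
    using ex_nonzero_vec[where 'n='a] by auto
  then show ?thesis unfolding Qf_def by simp
qed

lemma Qf_zero_fun: "Qf D (\<lambda>_. 0) = (\<lambda>_. 0)"
  using Qf_zero by auto

lemma holo_zero: "holo (\<lambda>_. 0) D"
  unfolding holo_def by (auto intro!: exI[of _ "\<lambda>_. 0"])

lemma zero_bloch: "(\<lambda>_. 0) \<in> bloch_space D"
  unfolding bloch_space_def using holo_zero by (auto simp add: Qf_zero_fun intro: bdd_aboveI[of _ 0])

lemma zero_little: "(\<lambda>_. 0) \<in> little_bloch_star D"
  unfolding little_bloch_star_def using zero_bloch by (simp add: Qf_zero_fun)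

lemma norm_zero: "D \<noteq> {} \<Longrightarrow> bloch_norm D (\<lambda>_. 0) = 0"
  unfolding bloch_norm_def bloch_seminorm_def by (simp add: Qf_zero)

lemma Qf_const: "Qf D (\<lambda>_. c) z = 0"
proof -
  have "{cmod (frechet_derivative (\<lambda>_. c::complex) (at z) u) / sqrt (bergman_metric D z u) | u. u \<noteq> 0} = {0}"
    using ex_nonzero_vec[where 'n='a] by auto
  then show ?thesis unfolding Qf_def by simp
qed

lemma const_bloch: "(\<lambda>_. c) \<in> bloch_space (D :: (complex^'n) set)"
proof -
  have "holo (\<lambda>_. c) D" unfolding holo_def by (auto intro!: exI[of _ "\<lambda>_. 0"])
  moreover have "Qf D (\<lambda>_. c) = (\<lambda>_. 0)" using Qf_const by auto
  ultimately show ?thesis unfolding bloch_space_def by (auto intro: bdd_aboveI[of _ 0])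
qed

lemma norm_const: "D \<noteq> {} \<Longrightarrow> bloch_norm D (\<lambda>_. c) = cmod c"
  unfolding bloch_norm_def bloch_seminorm_def by (simp add: Qf_const)

theorem lemma3p1:
  fixes D :: "(complex^'n) set" and \<mu> :: "complex^'n \<Rightarrow> real"
    and \<psi> :: "complex^'n \<Rightarrow> complex" and \<phi> :: "complex^'n \<Rightarrow> complex^'n"
  assumes "bounded D" and "homogeneous_domain D" and "0 \<in> D"
    and "continuous_on D \<mu>" and "\<forall>z\<in>D. \<mu> z > 0"
    and "holo \<psi> D"
    and "holo_map \<phi> D" and "\<phi> ` D \<subseteq> D"
    and "wco_bounded D \<mu> \<psi> \<phi>"
  shows "bdd_above ((\<lambda>z. \<mu> z * cmod (\<psi> z) * omega D (\<phi> z)) ` D)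
    \<and> upsilon0 D \<mu> \<psi> \<phi> \<le> upsilon D \<mu> \<psi> \<phi>
    \<and> upsilon D \<mu> \<psi> \<phi> \<le> wco_norm D \<mu> \<psi> \<phi>"
proof -
  have Dne: "D \<noteq> {}" using assms(3) by auto
  obtain C where C: "\<And>f. f \<in> bloch_space D \<Longrightarrow>
      bdd_above ((\<lambda>z. \<mu> z * cmod (\<psi> z * f (\<phi> z))) ` D) \<and>
      hinf_norm D \<mu> (\<lambda>z. \<psi> z * f (\<phi> z)) \<le> C * bloch_norm D f"
    using assms(9) unfolding wco_bounded_def by meson
  have h0: "hinf_norm D \<mu> (\<lambda>z. \<psi> z * 0) = 0"
    unfolding hinf_norm_def using Dne by simp
  have C0: "C \<ge> 0"
  proof -
    obtain z where z: "z \<in> D" using Dne by blast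
    have b1: "bdd_above ((\<lambda>z. \<mu> z * cmod (\<psi> z * 1)) ` D)"
      and h1: "hinf_norm D \<mu> (\<lambda>z. \<psi> z * 1) \<le> C * 1"
      using C[OF const_bloch[of 1]] norm_const[OF Dne, of 1] by auto
    have "0 \<le> \<mu> z * cmod (\<psi> z * 1)" using assms(5) z by (simp add: less_imp_le)
    also have "\<dots> \<le> hinf_norm D \<mu> (\<lambda>z. \<psi> z * 1)"
      unfolding hinf_norm_def using b1 z by (rule cSUP_upper[rotated])
    finally show ?thesis using h1 by simp
  qed
  define T where "T = {hinf_norm D \<mu> (\<lambda>z. \<psi> z * f (\<phi> z)) | f. f \<in> bloch_space D \<and> bloch_norm D f \<le> 1}"
  have Tne: "0 \<in> T" unfolding T_def using zero_bloch norm_zero[OF Dne] h0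
    by (auto intro!: exI[of _ "\<lambda>_. 0"])
  have Tb: "bdd_above T"
  proof (rule bdd_aboveI[of _ C])
    fix x assume "x \<in> T"
    then obtain f where f: "f \<in> bloch_space D" "bloch_norm D f \<le> 1"
      and x: "x = hinf_norm D \<mu> (\<lambda>z. \<psi> z * f (\<phi> z))" unfolding T_def by blast
    have "C * bloch_norm D f \<le> C" using C0 f(2) by (simp add: mult_left_le)
    then show "x \<le> C" using C[OF f(1)] x by linarith
  qed
  have wn: "wco_norm D \<mu> \<psi> \<phi> = Sup T" unfolding wco_norm_def T_def by simp
  have key: "\<mu> z * cmod (\<psi> z) * cmod (f (\<phi> z)) \<le> Sup T"
    if z: "z \<in> D" and f: "f \<in> bloch_space D" "bloch_norm D f \<le> 1" for z f
  proof -
    have "\<mu> z * cmod (\<psi> z * f (\<phi> z)) \<le> hinf_norm D \<mu> (\<lambda>z. \<psi> z * f (\<phi> z))"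
      unfolding hinf_norm_def using C[OF f(1)] z by (auto intro!: cSUP_upper)
    also have "\<dots> \<le> Sup T" using Tb f unfolding T_def by (auto intro!: cSup_upper)
    finally show ?thesis by (simp add: norm_mult mult.assoc)
  qed
  define S where "S w = {cmod (f w) | f. f \<in> bloch_space D \<and> f 0 = 0 \<and> bloch_norm D f \<le> 1}" for w
  define S0 where "S0 w = {cmod (f w) | f. f \<in> little_bloch_star D \<and> f 0 = 0 \<and> bloch_norm D f \<le> 1}" for w
  have S0ne: "S0 w \<noteq> {}" for w unfolding S0_def using zero_little norm_zero[OF Dne] by (auto intro!: exI[of _ "\<lambda>_. 0"])
  have S0S: "S0 w \<subseteq> S w" for w unfolding S0_def S_def little_bloch_star_def by auto
  have om: "omega D w = Sup (S w)" for w unfolding omega_def S_def by simp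
  have om0: "omega0 D w = Sup (S0 w)" for w unfolding omega0_def S0_def by simp
  have pos: "0 < \<mu> z * cmod (\<psi> z)" if "z \<in> D" "\<psi> z \<noteq> 0" for z
    using that assms(5) by simp
  have Sb: "bdd_above (S (\<phi> z))" and omle: "\<mu> z * cmod (\<psi> z) * omega D (\<phi> z) \<le> Sup T"
    if z: "z \<in> D" "\<psi> z \<noteq> 0" for z
  proof -
    have p: "0 < \<mu> z * cmod (\<psi> z)" using pos[OF z] .
    have b: "x \<le> Sup T / (\<mu> z * cmod (\<psi> z))" if "x \<in> S (\<phi> z)" for x
    proof -
      obtain f where f: "f \<in> bloch_space D" "bloch_norm D f \<le> 1" and x: "x = cmod (f (\<phi> z))"
        using \<open>x \<in> S (\<phi> z)\<close> unfolding S_def by blast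
      show ?thesis using key[OF z(1) f] p x by (simp add: pos_le_divide_eq mult.commute)
    qed
    then show "bdd_above (S (\<phi> z))" by (rule bdd_aboveI)
    have "S (\<phi> z) \<noteq> {}" using S0ne S0S by blast
    then have "omega D (\<phi> z) \<le> Sup T / (\<mu> z * cmod (\<psi> z))"
      unfolding om using b by (rule cSup_least)
    then show "\<mu> z * cmod (\<psi> z) * omega D (\<phi> z) \<le> Sup T"
      using p by (simp add: le_divide_eq mult.commute)
  qed
  have pt: "\<mu> z * cmod (\<psi> z) * omega D (\<phi> z) \<le> Sup T" if "z \<in> D" for z
  proof (cases "\<psi> z = 0")
    case True then show ?thesis using cSup_upper[OF Tne Tb] by simp
  next
    case False then show ?thesis using omle[OF that] by simp
  qed
  have bdd: "bdd_above ((\<lambda>z. \<mu> z * cmod (\<psi> z) * omega D (\<phi> z)) ` D)"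
    using pt by (auto intro!: bdd_aboveI)
  have pt0: "\<mu> z * cmod (\<psi> z) * omega0 D (\<phi> z) \<le> \<mu> z * cmod (\<psi> z) * omega D (\<phi> z)"
    if "z \<in> D" for z
  proof (cases "\<psi> z = 0")
    case True then show ?thesis by simp
  next
    case False
    have "omega0 D (\<phi> z) \<le> omega D (\<phi> z)" unfolding om om0
      using cSup_subset_mono[OF S0ne Sb[OF that False] S0S] .
    then show ?thesis using pos[OF that False] by (simp add: mult_left_mono)
  qed
  have "upsilon0 D \<mu> \<psi> \<phi> \<le> upsilon D \<mu> \<psi> \<phi>"
    unfolding upsilon0_def upsilon_def using Dne bdd pt0
    by (intro cSUP_mono) auto
  moreover have "upsilon D \<mu> \<psi> \<phi> \<le> wco_norm D \<mu> \<psi> \<phi>"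
    unfolding upsilon_def wn using Dne pt by (intro cSUP_least) auto
  ultimately show ?thesis using bdd by blast
qed

end
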